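(* Let $p\in[1,\infty]$ and let $(X,d,\mu)$ be an infinitesimally doubling metric measure space which is $p$-thick geodesic. Then $d=d_p$.
   Context: A metric measure space is a proper metric space with a Borel regular outer measure positive and finite on balls; infinitesimally doubling means $\limsup_{r\to0}\mu(B(x,2r))/\mu(B(x,r))<\infty$ for $\mu$-a.e. $x$. $\operatorname{Mod}_p\Gamma=\inf\int\rho^pd\mu$ (for $p<\infty$), $\operatorname{Mod}_\infty\Gamma=\inf\|\rho\|_{L^\infty}$, over Borel $\rho\ge0$ with $\int_\gamma\rho\ge1$ on $\Gamma$. $\Gamma(E,F;C)$ is the family of curves $\gamma:[0,1]\to X$ with $\gamma(0)\in E,\gamma(1)\in F,\ell(\gamma)\le Cd(\gamma(0),\gamma(1))$; $X$ is $p$-thick geodesic if $\operatorname{Mod}_p\Gamma(E,F;C)>0$ for all $C>1$ and all measurable $E,F$ of positive measure. With $\Gamma(E,F)$ the Lipschitz curves $[0,1]\to X$ from $E$ to $F$, $ess\ell_p(\Gamma):=\sup_{\operatorname{Mod}_p\Gamma_0=0}\inf\{\ell(\gamma):\gamma\in\Gamma\setminus\Gamma_0\}$ ($\inf\emptyset=\infty$), $d_p'(x,y):=\lim_{\delta\to0}ess\ell_p\Gamma(\bar B(x,\delta),\bar B(y,\delta))$, and $d_p(x,y):=\inf\{\sum_{i=1}^nd_p'(x_{i-1},x_i):x_0=x,x_n=y\}$. *)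

theory Defs
  imports "HOL-Analysis.Analysis" "HOL-Probability.Probability"
begin

text \<open>Curves are maps real => 'a, considered on [0,1].
  Length = total variation on an interval (possibly infinite).\<close>
definition var_on :: "(real \<Rightarrow> 'a::metric_space) \<Rightarrow> real \<Rightarrow> real \<Rightarrow> ennreal" where
  "var_on \<gamma> a b = (SUP ts \<in> {ts. sorted ts \<and> set ts \<subseteq> {a..b}}.
      ennreal (\<Sum>i<length ts - 1. dist (\<gamma> (ts ! i)) (\<gamma> (ts ! (i + 1)))))"

definition curve_length :: "(real \<Rightarrow> 'a::metric_space) \<Rightarrow> ennreal" where
  "curve_length \<gamma> = var_on \<gamma> 0 1"

definition arclen_param :: "(real \<Rightarrow> 'a::metric_space) \<Rightarrow> real \<Rightarrow> 'a" where
  "arclen_param \<gamma> s = \<gamma> (SOME t. t \<in> {0..1} \<and> var_on \<gamma> 0 t = ennreal s)"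

definition line_integral :: "('a::metric_space \<Rightarrow> ennreal) \<Rightarrow> (real \<Rightarrow> 'a) \<Rightarrow> ennreal" where
  "line_integral \<rho> \<gamma> =
     (\<integral>\<^sup>+ s \<in> {0..enn2real (curve_length \<gamma>)}. \<rho> (arclen_param \<gamma> s) \<partial>lborel)"

definition enn_powr :: "ennreal \<Rightarrow> real \<Rightarrow> ennreal" where
  "enn_powr x q = (if x = \<infinity> then \<infinity> else ennreal (enn2real x powr q))"

definition admissible :: "(real \<Rightarrow> 'a::metric_space) set \<Rightarrow> ('a \<Rightarrow> ennreal) \<Rightarrow> bool" where
  "admissible \<Gamma> \<rho> \<longleftrightarrow> \<rho> \<in> borel_measurable borel \<and> (\<forall>\<gamma>\<in>\<Gamma>. 1 \<le> line_integral \<rho> \<gamma>)"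

definition ess_sup_enn :: "'a measure \<Rightarrow> ('a \<Rightarrow> ennreal) \<Rightarrow> ennreal" where
  "ess_sup_enn M \<rho> = Inf {c. AE x in M. \<rho> x \<le> c}"

definition Mod :: "'a::metric_space measure \<Rightarrow> ennreal \<Rightarrow> (real \<Rightarrow> 'a) set \<Rightarrow> ennreal" where
  "Mod M p \<Gamma> = (if p = \<infinity> then Inf {ess_sup_enn M \<rho> | \<rho>. admissible \<Gamma> \<rho>}
                 else Inf {(\<integral>\<^sup>+ x. enn_powr (\<rho> x) (enn2real p) \<partial>M) | \<rho>. admissible \<Gamma> \<rho>})"

definition quasi_geod_curves :: "'a::metric_space set \<Rightarrow> 'a set \<Rightarrow> real \<Rightarrow> (real \<Rightarrow> 'a) set" where
  "quasi_geod_curves E F C = {\<gamma>. continuous_on {0..1} \<gamma> \<and> \<gamma> 0 \<in> E \<and> \<gamma> 1 \<in> F \<and>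
       curve_length \<gamma> \<le> ennreal (C * dist (\<gamma> 0) (\<gamma> 1))}"

definition lip_curves :: "'a::metric_space set \<Rightarrow> 'a set \<Rightarrow> (real \<Rightarrow> 'a) set" where
  "lip_curves E F = {\<gamma>. (\<exists>L. L-lipschitz_on {0..1} \<gamma>) \<and> \<gamma> 0 \<in> E \<and> \<gamma> 1 \<in> F}"

definition metric_measure_space :: "'a::metric_space measure \<Rightarrow> bool" where
  "metric_measure_space M \<longleftrightarrow> (\<forall>x\<in>space M. \<forall>r. compact (cball x r)) \<and> sets M = sets borel \<and>
     (\<forall>x r. r > 0 \<longrightarrow> 0 < emeasure M (ball x r) \<and> emeasure M (ball x r) < \<infinity>)"

definition infinitesimally_doubling :: "'a::metric_space measure \<Rightarrow> bool" where
  "infinitesimally_doubling M \<longleftrightarrow>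
     (AE x in M. Limsup (at_right (0::real)) (\<lambda>r. emeasure M (ball x (2 * r)) / emeasure M (ball x r)) < \<infinity>)"

definition p_thick_geodesic :: "'a::metric_space measure \<Rightarrow> ennreal \<Rightarrow> bool" where
  "p_thick_geodesic M p \<longleftrightarrow> (\<forall>C>1. \<forall>E\<in>sets (completion M). \<forall>F\<in>sets (completion M).
      0 < emeasure (completion M) E \<longrightarrow> 0 < emeasure (completion M) F \<longrightarrow>
      0 < Mod M p (quasi_geod_curves E F C))"

definition ess_length :: "'a::metric_space measure \<Rightarrow> ennreal \<Rightarrow> (real \<Rightarrow> 'a) set \<Rightarrow> ennreal" where
  "ess_length M p \<Gamma> = (SUP \<Gamma>0 \<in> {\<Gamma>0. Mod M p \<Gamma>0 = 0}. INF \<gamma> \<in> \<Gamma> - \<Gamma>0. curve_length \<gamma>)"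

definition dp' :: "'a::metric_space measure \<Rightarrow> ennreal \<Rightarrow> 'a \<Rightarrow> 'a \<Rightarrow> ennreal" where
  "dp' M p x y = Lim (at_right (0::real)) (\<lambda>\<delta>. ess_length M p (lip_curves (cball x \<delta>) (cball y \<delta>)))"

definition dp :: "'a::metric_space measure \<Rightarrow> ennreal \<Rightarrow> 'a \<Rightarrow> 'a \<Rightarrow> ennreal" where
  "dp M p x y = (INF xs \<in> {xs. 2 \<le> length xs \<and> hd xs = x \<and> last xs = y}.
       \<Sum>i<length xs - 1. dp' M p (xs ! i) (xs ! (i + 1)))"

end

theory Submission
  imports Defs
begin

fun psum :: "('b \<Rightarrow> 'a::metric_space) \<Rightarrow> 'b list \<Rightarrow> real" where
  "psum g [] = 0" | "psum g [x] = 0" | "psum g (x # y # zs) = dist (g x) (g y) + psum g (y # zs)"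

lemma sum_eq_psum: "(\<Sum>i<length ts - 1. dist (g (ts ! i)) (g (ts ! (i + 1)))) = psum g ts"
proof (induction g ts rule: psum.induct)
  case (3 g x y zs)
  have "(\<Sum>i<length (x#y#zs) - 1. dist (g ((x#y#zs) ! i)) (g ((x#y#zs) ! (i + 1))))
      = dist (g x) (g y) + (\<Sum>i<length (y#zs) - 1. dist (g ((y#zs) ! i)) (g ((y#zs) ! (i + 1))))"
    by (simp add: sum.lessThan_Suc_shift del: sum.lessThan_Suc)
  then show ?case using 3 by simp
qed auto

lemma psum_nonneg: "0 \<le> psum g ts"
  by (induction g ts rule: psum.induct) auto

lemma psum_ge_dist: "ts \<noteq> [] \<Longrightarrow> dist (g (hd ts)) (g (last ts)) \<le> psum g ts"
proof (induction g ts rule: psum.induct)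
  case (3 g x y zs)
  then show ?case using dist_triangle[of "g x" "g (last (y#zs))" "g y"] by auto
qed auto

lemma psum_append: "psum g (xs @ y # ys) = psum g (xs @ [y]) + psum g (y # ys)"
  by (induction g xs rule: psum.induct) auto

lemma psum_Cons_ge: "psum g ys \<le> psum g (z # ys)"
  by (cases ys) (auto simp: psum_nonneg)

lemma psum_snoc_ge: "psum g xs \<le> psum g (xs @ [z])"
proof (cases xs rule: rev_cases)
  case (snoc xs0 a)
  then show ?thesis using psum_append[of g xs0 a "[z]"] by auto
qed auto

lemma psum_split_le: "psum g (xs @ ys) \<le> psum g (xs @ [z]) + psum g (z # ys)"
proof (cases "xs = []")
  case True then show ?thesis using psum_Cons_ge[of g ys z] by simp
next
  case False
  then obtain xs0 a where xs: "xs = xs0 @ [a]" by (metis rev_exhaust)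
  show ?thesis
  proof (cases ys)
    case Nil then show ?thesis using psum_snoc_ge[of g xs z] psum_nonneg[of g "[z]"] by simp
  next
    case (Cons b ys0)
    have 1: "psum g (xs @ ys) = psum g (xs0 @ [a]) + dist (g a) (g b) + psum g (b # ys0)"
      using psum_append[of g xs0 a "b # ys0"] xs Cons by simp
    have 2: "psum g (xs @ [z]) = psum g (xs0 @ [a]) + dist (g a) (g z)"
      using psum_append[of g xs0 a "[z]"] xs by simp
    have 3: "psum g (z # ys) = dist (g z) (g b) + psum g (b # ys0)"
      using Cons by simp
    show ?thesis using 1 2 3 dist_triangle[of "g a" "g b" "g z"] by linarith
  qed
qed

lemma psum_append_ge: "psum g xs + psum g ys \<le> psum g (xs @ ys)"
proof (cases "xs = [] \<or> ys = []")
  case True then show ?thesis by auto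
next
  case False
  then obtain xs0 a where xs: "xs = xs0 @ [a]" by (metis rev_exhaust)
  from False obtain b ys0 where ys: "ys = b # ys0" by (metis list.exhaust)
  have 1: "psum g (xs @ ys) = psum g (xs0 @ [a]) + dist (g a) (g b) + psum g (b # ys0)"
    using psum_append[of g xs0 a "b # ys0"] xs ys by simp
  show ?thesis using 1 xs ys by simp
qed

lemma psum_const: "set ys \<subseteq> {t} \<Longrightarrow> psum g ys = 0"
  by (induction g ys rule: psum.induct) auto

lemma psum_Cons_const: "set ys \<subseteq> {t} \<Longrightarrow> ys \<noteq> [] \<Longrightarrow> psum g (s # ys) = dist (g s) (g t)"
  by (cases ys) (auto simp: psum_const)

lemma psum_const_append: "set xs \<subseteq> {t} \<Longrightarrow> xs \<noteq> [] \<Longrightarrow> psum g (xs @ ys) = psum g (t # ys)"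
proof (induction xs)
  case (Cons x xs)
  then show ?case by (cases xs; cases ys) auto
qed auto

lemma psum_map: "psum g (map h ts) = psum (g \<circ> h) ts"
  by (induction "g \<circ> h" ts rule: psum.induct) auto

lemma psum_cong: "(\<And>x. x \<in> set ts \<Longrightarrow> g x = g' x) \<Longrightarrow> psum g ts = psum g' ts"
  by (induction g ts rule: psum.induct) auto

lemma psum_lip:
  assumes "sorted ts" "set ts \<subseteq> S" "ts \<noteq> []"
    and "\<And>x y. x \<in> S \<Longrightarrow> y \<in> S \<Longrightarrow> x \<le> y \<Longrightarrow> dist (g x) (g y) \<le> K * (y - x)"
  shows "psum g ts \<le> K * (last ts - hd ts)"
  using assms
proof (induction g ts rule: psum.induct)
  case (3 g x y zs)
  have "dist (g x) (g y) \<le> K * (y - x)" using 3 by auto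
  moreover have "psum g (y # zs) \<le> K * (last (y # zs) - y)" using 3 by auto
  ultimately show ?case by (simp add: algebra_simps)
qed auto

lemma var_eq: "var_on g a b = (SUP ts \<in> {ts. sorted ts \<and> set ts \<subseteq> {a..b}}. ennreal (psum g ts))"
  unfolding var_on_def sum_eq_psum ..

lemma var_ge: "sorted ts \<Longrightarrow> set ts \<subseteq> {a..b} \<Longrightarrow> ennreal (psum g ts) \<le> var_on g a b"
  unfolding var_eq by (rule SUP_upper) auto

lemma var_le: "(\<And>ts. sorted ts \<Longrightarrow> set ts \<subseteq> {a..b} \<Longrightarrow> ennreal (psum g ts) \<le> c) \<Longrightarrow> var_on g a b \<le> c"
  unfolding var_eq by (rule SUP_least) auto

lemma var_dist: "a \<le> b \<Longrightarrow> ennreal (dist (g a) (g b)) \<le> var_on g a b"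
  using var_ge[of "[a, b]" a b g] by simp

lemma var_mono: "a' \<le> a \<Longrightarrow> b \<le> b' \<Longrightarrow> var_on g a b \<le> var_on g a' b'"
  by (rule var_le, rule var_ge) auto

lemma var_refl: "var_on g t t = 0"
  by (rule antisym, rule var_le) (auto simp: psum_const)

lemma var_super:
  assumes "a \<le> b" "b \<le> c"
  shows "var_on g a b + var_on g b c \<le> var_on g a c"
proof -
  have key: "ennreal (psum g ts1) + ennreal (psum g ts2) \<le> var_on g a c"
    if "sorted ts1" "set ts1 \<subseteq> {a..b}" "sorted ts2" "set ts2 \<subseteq> {b..c}" for ts1 ts2
  proof -
    have "ennreal (psum g ts1) + ennreal (psum g ts2) = ennreal (psum g ts1 + psum g ts2)"
      by (simp add: ennreal_plus psum_nonneg)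
    also have "\<dots> \<le> ennreal (psum g (ts1 @ ts2))" using psum_append_ge by (rule ennreal_leI)
    also have "\<dots> \<le> var_on g a c"
    proof (rule var_ge)
      show "sorted (ts1 @ ts2)" using that by (auto simp: sorted_append subset_iff intro: order_trans)
      show "set (ts1 @ ts2) \<subseteq> {a..c}" using that assms by (auto simp: subset_iff intro: order_trans)
    qed
    finally show ?thesis .
  qed
  let ?P = "\<lambda>a b. {ts. sorted ts \<and> set ts \<subseteq> {a..b::real}}"
  have ne: "?P a b \<noteq> {}" "?P b c \<noteq> {}" by (auto intro!: exI[of _ "[]"])
  have "var_on g a b + var_on g b c = (SUP ts1 \<in> ?P a b. ennreal (psum g ts1) + var_on g b c)"
    unfolding var_eq[of g a b] by (rule ennreal_SUP_add_left[symmetric]) (fact ne)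
  also have "\<dots> \<le> var_on g a c"
  proof (rule SUP_least)
    fix ts1 assume ts1: "ts1 \<in> ?P a b"
    have "ennreal (psum g ts1) + var_on g b c = (SUP ts2 \<in> ?P b c. ennreal (psum g ts1) + ennreal (psum g ts2))"
      unfolding var_eq[of g b c] by (rule ennreal_SUP_add_right) (fact ne)
    also have "\<dots> \<le> var_on g a c"
      using ts1 by (intro SUP_least key) auto
    finally show "ennreal (psum g ts1) + var_on g b c \<le> var_on g a c" .
  qed
  finally show ?thesis .
qed

lemma var_sub:
  assumes "a \<le> b" "b \<le> c"
  shows "var_on g a c \<le> var_on g a b + var_on g b c"
proof (rule var_le)
  fix ts assume ts: "sorted ts" "set ts \<subseteq> {a..c}"
  define xs where "xs = takeWhile (\<lambda>x. x \<le> b) ts"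
  define ys where "ys = dropWhile (\<lambda>x. x \<le> b) ts"
  have tsxy: "ts = xs @ ys" unfolding xs_def ys_def by simp
  have sxs: "sorted xs" and sys: "sorted ys" using ts(1) tsxy by (auto simp: sorted_append)
  have xsb: "\<forall>x\<in>set xs. x \<le> b" unfolding xs_def by (auto dest: set_takeWhileD)
  have ysb: "\<forall>y\<in>set ys. b \<le> y"
  proof
    fix y assume y: "y \<in> set ys"
    then have ne: "ys \<noteq> []" by auto
    then have "\<not> hd ys \<le> b" unfolding ys_def by (rule hd_dropWhile)
    moreover have "hd ys \<le> y" using sys ne y by (cases ys) auto
    ultimately show "b \<le> y" by simp
  qed
  have "psum g ts \<le> psum g (xs @ [b]) + psum g (b # ys)"
    unfolding tsxy by (rule psum_split_le)
  then have "ennreal (psum g ts) \<le> ennreal (psum g (xs @ [b])) + ennreal (psum g (b # ys))"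
    by (simp add: ennreal_plus[symmetric] psum_nonneg ennreal_leI del: ennreal_plus)
  also have "\<dots> \<le> var_on g a b + var_on g b c"
  proof (rule add_mono; rule var_ge)
    show "sorted (xs @ [b])" using sxs xsb by (auto simp: sorted_append)
    show "set (xs @ [b]) \<subseteq> {a..b}" using ts(2) tsxy xsb assms by auto
    show "sorted (b # ys)" using sys ysb by auto
    show "set (b # ys) \<subseteq> {b..c}" using ts(2) tsxy ysb assms by auto
  qed
  finally show "ennreal (psum g ts) \<le> var_on g a b + var_on g b c" .
qed

lemma var_add: "a \<le> b \<Longrightarrow> b \<le> c \<Longrightarrow> var_on g a c = var_on g a b + var_on g b c"
  using var_sub var_super by (metis antisym)

context
  fixes g :: "real \<Rightarrow> 'a::metric_space"
  assumes cont: "continuous_on {0..1} g" and fin: "var_on g 0 1 \<noteq> \<infinity>"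
begin

definition w :: "real \<Rightarrow> real \<Rightarrow> real" where "w a b = enn2real (var_on g a b)"

lemma fin_ab: "0 \<le> a \<Longrightarrow> b \<le> 1 \<Longrightarrow> var_on g a b \<noteq> \<infinity>"
  using var_mono[of 0 a b 1 g] fin by (auto simp: top_unique)

lemma var_real: "0 \<le> a \<Longrightarrow> b \<le> 1 \<Longrightarrow> var_on g a b = ennreal (w a b)"
  unfolding w_def using fin_ab[of a b] by (simp add: less_top)

lemma w_nonneg: "0 \<le> w a b"
  unfolding w_def by simp

lemma w_add: "0 \<le> a \<Longrightarrow> a \<le> b \<Longrightarrow> b \<le> c \<Longrightarrow> c \<le> 1 \<Longrightarrow> w a c = w a b + w b c"
  unfolding w_def using var_add[of a b c g] fin_ab[of a b] fin_ab[of b c]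
  by (simp add: enn2real_plus less_top)

lemma w_mono: "0 \<le> a' \<Longrightarrow> a' \<le> a \<Longrightarrow> b \<le> b' \<Longrightarrow> b' \<le> 1 \<Longrightarrow> w a b \<le> w a' b'"
  unfolding w_def using var_mono[of a' a b b' g] fin_ab[of a' b']
  by (intro enn2real_mono) (auto simp: less_top)

lemma dist_w: "0 \<le> a \<Longrightarrow> a \<le> b \<Longrightarrow> b \<le> 1 \<Longrightarrow> dist (g a) (g b) \<le> w a b"
  using var_dist[of a b g] var_real[of a b] w_nonneg[of a b] by simp

lemma psum_w: "sorted ts \<Longrightarrow> set ts \<subseteq> {a..b} \<Longrightarrow> 0 \<le> a \<Longrightarrow> b \<le> 1 \<Longrightarrow> psum g ts \<le> w a b"
  using var_ge[of ts a b g] var_real[of a b] w_nonneg[of a b] psum_nonneg[of g ts] by simp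

lemma approx_psum:
  assumes "0 \<le> a" "b \<le> 1" "e > 0" "e < w a b"
  obtains ts where "sorted ts" "set ts \<subseteq> {a..b}" "w a b - e < psum g ts"
proof -
  have "ennreal (w a b - e) < var_on g a b"
    using var_real[OF assms(1,2)] assms(3,4) by (simp add: ennreal_lessI)
  then obtain ts where "ts \<in> {ts. sorted ts \<and> set ts \<subseteq> {a..b}}" "ennreal (w a b - e) < ennreal (psum g ts)"
    unfolding var_eq by (auto simp: less_SUP_iff)
  then show ?thesis using that ennreal_less_iff[of "w a b - e" "psum g ts"] assms by auto
qed

lemma right_small:
  assumes t: "0 \<le> t" "t < 1" and e: "e > 0"
  shows "\<exists>s. t < s \<and> s \<le> 1 \<and> w t s \<le> e"
proof (cases "w t 1 \<le> e")
  case True then show ?thesis using t by auto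
next
  case False
  then obtain ts where ts: "sorted ts" "set ts \<subseteq> {t..1}" "w t 1 - e/2 < psum g ts"
    using approx_psum[of t 1 "e/2"] t e by auto
  obtain d where d: "d > 0" "\<And>x. x \<in> {0..1} \<Longrightarrow> dist x t < d \<Longrightarrow> dist (g x) (g t) < e/2"
    using cont t e unfolding continuous_on_iff by (metis atLeastAtMost_iff half_gt_zero less_eq_real_def)
  define m where "m = Min (insert 1 {x \<in> set ts. t < x})"
  have mfin: "finite (insert 1 {x \<in> set ts. t < x})" by auto
  have mt: "t < m" unfolding m_def using mfin t by (subst Min_gr_iff) auto
  have m1: "m \<le> 1" unfolding m_def using mfin by (intro Min_le) auto
  have mle: "m \<le> x" if "x \<in> set ts" "t < x" for x unfolding m_def using mfin that by (intro Min_le) auto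
  define s where "s = min (t + d/2) ((t+m)/2)"
  have st: "t < s" "s < m" "s \<le> 1" "dist s t < d" using mt m1 d(1) unfolding s_def dist_real_def by (auto simp: min_def)
  have tsel: "x = t \<or> s < x" if "x \<in> set ts" for x
    using ts(2) that mle[of x] st by force
  define xs where "xs = takeWhile (\<lambda>x. x \<le> s) ts"
  define ys where "ys = dropWhile (\<lambda>x. x \<le> s) ts"
  have tsxy: "ts = xs @ ys" unfolding xs_def ys_def by simp
  have sys: "sorted ys" using ts(1) tsxy by (auto simp: sorted_append)
  have xst: "set xs \<subseteq> {t}" unfolding xs_def using tsel st by (force dest: set_takeWhileD)
  have yss: "\<forall>y\<in>set ys. s \<le> y"
  proof
    fix y assume y: "y \<in> set ys"
    then have ne: "ys \<noteq> []" by auto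
    then have "\<not> hd ys \<le> s" unfolding ys_def by (rule hd_dropWhile)
    moreover have "hd ys \<le> y" using sys ne y by (cases ys) auto
    ultimately show "s \<le> y" by simp
  qed
  have "psum g ts \<le> psum g (xs @ [s]) + psum g (s # ys)"
    unfolding tsxy by (rule psum_split_le)
  moreover have "psum g (xs @ [s]) \<le> e/2"
  proof (cases "xs = []")
    case True then show ?thesis using e by simp
  next
    case False
    then have "psum g (xs @ [s]) = dist (g t) (g s)" using psum_const_append[OF xst False, of g "[s]"] by simp
    also have "\<dots> < e/2" using d(2)[of s] st t by (simp add: dist_commute)
    finally show ?thesis by simp
  qed
  moreover have "psum g (s # ys) \<le> w s 1"
    using sys yss tsxy ts(2) st t by (intro psum_w) auto
  moreover have "w t 1 = w t s + w s 1" using w_add[of t s 1] st t by simp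
  ultimately have "w t s < e" using ts(3) by linarith
  then show ?thesis using st by auto
qed

lemma left_small:
  assumes t: "0 < t" "t \<le> 1" and e: "e > 0"
  shows "\<exists>s. 0 \<le> s \<and> s < t \<and> w s t \<le> e"
proof (cases "w 0 t \<le> e")
  case True then show ?thesis using t by auto
next
  case False
  then obtain ts where ts: "sorted ts" "set ts \<subseteq> {0..t}" "w 0 t - e/2 < psum g ts"
    using approx_psum[of 0 t "e/2"] t e by auto
  obtain d where d: "d > 0" "\<And>x. x \<in> {0..1} \<Longrightarrow> dist x t < d \<Longrightarrow> dist (g x) (g t) < e/2"
    using cont t e unfolding continuous_on_iff by (metis atLeastAtMost_iff half_gt_zero less_eq_real_def)
  define m where "m = Max (insert 0 {x \<in> set ts. x < t})"
  have mfin: "finite (insert 0 {x \<in> set ts. x < t})" by auto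
  have mt: "m < t" unfolding m_def using mfin t by (subst Max_less_iff) auto
  have m0: "0 \<le> m" unfolding m_def using mfin by (intro Max_ge) auto
  have mle: "x \<le> m" if "x \<in> set ts" "x < t" for x unfolding m_def using mfin that by (intro Max_ge) auto
  define s where "s = max (t - d/2) ((t+m)/2)"
  have st0: "s < t" "m < s" "0 \<le> s" using mt m0 d(1) unfolding s_def by (auto simp: max_def)
  have "t - d/2 \<le> s" unfolding s_def by (rule max.cobounded1)
  then have "t - s \<le> d/2" by simp
  then have "dist s t < d" using st0 d(1) unfolding dist_real_def by simp
  note st = st0 this
  have tsel: "x = t \<or> x < s" if "x \<in> set ts" for x
    using ts(2) that mle[of x] st by force
  define xs where "xs = takeWhile (\<lambda>x. x < s) ts"
  define ys where "ys = dropWhile (\<lambda>x. x < s) ts"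
  have tsxy: "ts = xs @ ys" unfolding xs_def ys_def by simp
  have sxs: "sorted xs" and sys: "sorted ys" using ts(1) tsxy by (auto simp: sorted_append)
  have xss: "\<forall>x\<in>set xs. x < s" unfolding xs_def by (auto dest: set_takeWhileD)
  have yss: "\<forall>y\<in>set ys. s \<le> y"
  proof
    fix y assume y: "y \<in> set ys"
    then have ne: "ys \<noteq> []" by auto
    then have "\<not> hd ys < s" unfolding ys_def by (rule hd_dropWhile)
    moreover have "hd ys \<le> y" using sys ne y by (cases ys) auto
    ultimately show "s \<le> y" by simp
  qed
  have yst: "set ys \<subseteq> {t}"
  proof
    fix y assume "y \<in> set ys"
    then show "y \<in> {t}" using yss tsel[of y] tsxy by fastforce
  qed
  have "psum g ts \<le> psum g (xs @ [s]) + psum g (s # ys)"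
    unfolding tsxy by (rule psum_split_le)
  moreover have "psum g (s # ys) \<le> e/2"
  proof (cases "ys = []")
    case True then show ?thesis using e by simp
  next
    case False
    then have "psum g (s # ys) = dist (g s) (g t)" using psum_Cons_const[OF yst] by simp
    also have "\<dots> < e/2" using d(2)[of s] st t by simp
    finally show ?thesis by simp
  qed
  moreover have "psum g (xs @ [s]) \<le> w 0 s"
    using sxs xss tsxy ts(2) st t by (intro psum_w) (auto simp: sorted_append subset_iff less_imp_le)
  moreover have "w 0 t = w 0 s + w s t" using w_add[of 0 s t] st t by simp
  ultimately have "w s t < e" using ts(3) by linarith
  then show ?thesis using st by auto
qed

lemma w_cont: "continuous_on {0..1} (w 0)"
  unfolding continuous_on_iff
proof (intro ballI allI impI)
  fix t e :: real assume t: "t \<in> {0..1}" and e: "0 < e"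
  obtain s2 where s2: "t < 1 \<Longrightarrow> t < s2 \<and> s2 \<le> 1 \<and> w t s2 \<le> e/2"
    using right_small[of t "e/2"] t e by (cases "t < 1") auto
  obtain s1 where s1: "0 < t \<Longrightarrow> 0 \<le> s1 \<and> s1 < t \<and> w s1 t \<le> e/2"
    using left_small[of t "e/2"] t e by (cases "0 < t") auto
  define d where "d = min (if t < 1 then s2 - t else 1) (if 0 < t then t - s1 else 1)"
  have d: "d > 0" unfolding d_def using s1 s2 by auto
  show "\<exists>d>0. \<forall>x'\<in>{0..1}. dist x' t < d \<longrightarrow> dist (w 0 x') (w 0 t) < e"
  proof (intro exI[of _ d] conjI ballI impI d)
    fix x assume x: "x \<in> {0..1}" "dist x t < d"
    show "dist (w 0 x) (w 0 t) < e"
    proof (cases "t \<le> x")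
      case True
      show ?thesis
      proof (cases "x = t")
        case False
        then have tl: "t < 1" "x < s2" using True x s2 unfolding d_def dist_real_def by (auto split: if_splits)
        have "w 0 x = w 0 t + w t x" using w_add[of 0 t x] True t x by auto
        moreover have "w t x \<le> w t s2" using w_mono[of t t x s2] tl s2 t by auto
        ultimately show ?thesis using s2 tl e w_nonneg[of t x] unfolding dist_real_def by auto
      qed (use e in auto)
    next
      case False
      then have tl: "0 < t" "s1 < x" using x s1 unfolding d_def dist_real_def by (auto split: if_splits)
      have "w 0 t = w 0 x + w x t" using w_add[of 0 x t] False t x by auto
      moreover have "w x t \<le> w s1 t" using w_mono[of s1 x t t] tl s1 t by auto
      ultimately show ?thesis using s1 tl e w_nonneg[of x t] unfolding dist_real_def by auto
    qed
  qed
qed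


lemma w_refl: "w t t = 0"
  unfolding w_def by (simp add: var_refl)

lemma same_w_same_g:
  assumes "t1 \<in> {0..1}" "t2 \<in> {0..1}" "w 0 t1 = w 0 t2"
  shows "g t1 = g t2"
proof -
  have *: "g a = g b" if "0 \<le> a" "a \<le> b" "b \<le> 1" "w 0 a = w 0 b" for a b
  proof -
    have "w 0 b = w 0 a + w a b" using w_add[of 0 a b] that(1-3) by simp
    then have "w a b = 0" using that(4) by linarith
    then show ?thesis using dist_w[of a b] that(1-3) by simp
  qed
  show ?thesis
  proof (cases "t1 \<le> t2")
    case True then show ?thesis using *[of t1 t2] assms by auto
  next
    case False then show ?thesis using *[of t2 t1] assms by auto
  qed
qed

lemma dist_le_wdiff:
  assumes "t1 \<in> {0..1}" "t2 \<in> {0..1}"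
  shows "dist (g t1) (g t2) \<le> \<bar>w 0 t1 - w 0 t2\<bar>"
proof -
  have *: "dist (g a) (g b) \<le> \<bar>w 0 a - w 0 b\<bar>" if "0 \<le> a" "a \<le> b" "b \<le> 1" for a b
  proof -
    have "w 0 b = w 0 a + w a b" using w_add[of 0 a b] that by simp
    moreover have "dist (g a) (g b) \<le> w a b" using dist_w[of a b] that by simp
    ultimately show ?thesis using w_nonneg[of a b] by linarith
  qed
  show ?thesis
  proof (cases "t1 \<le> t2")
    case True then show ?thesis using *[of t1 t2] assms by auto
  next
    case False
    then have "dist (g t2) (g t1) \<le> \<bar>w 0 t2 - w 0 t1\<bar>" using *[of t2 t1] assms by auto
    then show ?thesis by (metis dist_commute abs_minus_commute)
  qed
qed

lemma w_mono0: "0 \<le> a \<Longrightarrow> a \<le> b \<Longrightarrow> b \<le> 1 \<Longrightarrow> w 0 a \<le> w 0 b"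
  using w_mono[of 0 0 a b] by simp

lemma sorted_map_mono: "sorted ts \<Longrightarrow> (\<And>x y. x \<in> set ts \<Longrightarrow> y \<in> set ts \<Longrightarrow> x \<le> y \<Longrightarrow> h x \<le> h y) \<Longrightarrow> sorted (map h ts)"
  by (induction ts) auto

context
  assumes Lpos: "w 0 1 > 0"
begin

definition L where "L = w 0 1"

definition phi :: "real \<Rightarrow> real" where
  "phi u = (SOME t. t \<in> {0..1} \<and> var_on g 0 t = ennreal (u * L))"

definition eta :: "real \<Rightarrow> 'a" where "eta u = g (phi u)"

lemma ex_t: "0 \<le> s \<Longrightarrow> s \<le> L \<Longrightarrow> \<exists>t. t \<in> {0..1} \<and> var_on g 0 t = ennreal s"
proof -
  assume s: "0 \<le> s" "s \<le> L"
  have "w 0 0 \<le> s" "s \<le> w 0 1" using s w_refl L_def by auto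
  then obtain t where "0 \<le> t" "t \<le> 1" "w 0 t = s" using IVT'[of "w 0" 0 s 1] w_cont by auto
  then show ?thesis using var_real[of 0 t] by auto
qed

lemma phi: assumes "0 \<le> u" "u \<le> 1" shows "phi u \<in> {0..1}" "w 0 (phi u) = u * L"
proof -
  have "0 \<le> u * L" "u * L \<le> L" using assms Lpos L_def by (auto simp: mult_left_le_one_le)
  then have "\<exists>t. t \<in> {0..1} \<and> var_on g 0 t = ennreal (u * L)" by (rule ex_t)
  then have "phi u \<in> {0..1} \<and> var_on g 0 (phi u) = ennreal (u * L)"
    unfolding phi_def by (rule someI_ex)
  moreover have "0 \<le> u * L" using assms Lpos L_def by auto
  ultimately show "phi u \<in> {0..1}" "w 0 (phi u) = u * L" unfolding w_def by auto
qed

lemma eta_lip: "L-lipschitz_on {0..1} eta"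
proof (rule lipschitz_onI)
  show "0 \<le> L" using Lpos L_def by simp
  fix x y :: real assume x: "x \<in> {0..1}" and y: "y \<in> {0..1}"
  have "dist (eta x) (eta y) \<le> \<bar>w 0 (phi x) - w 0 (phi y)\<bar>"
    unfolding eta_def using x y phi by (intro dist_le_wdiff) auto
  also have "\<dots> = L * dist x y" using x y phi[of x] phi[of y] Lpos L_def
    by (simp add: dist_real_def abs_mult left_diff_distrib[symmetric] mult.commute)
  finally show "dist (eta x) (eta y) \<le> L * dist x y" .
qed

lemma var_eta: assumes u: "0 \<le> u" "u \<le> 1" shows "var_on eta 0 u = ennreal (u * L)"
proof (rule antisym)
  show "var_on eta 0 u \<le> ennreal (u * L)"
  proof (rule var_le)
    fix ts assume ts: "sorted ts" "set ts \<subseteq> {0..u}"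
    show "ennreal (psum eta ts) \<le> ennreal (u * L)"
    proof (cases "ts = []")
      case False
      have "psum eta ts \<le> L * (last ts - hd ts)"
      proof (rule psum_lip[of ts "{0..1}"])
        show "set ts \<subseteq> {0..1}" using ts u by auto
        fix x y :: real assume xy: "x \<in> {0..1}" "y \<in> {0..1}" "x \<le> y"
        have "dist (eta x) (eta y) \<le> L * dist x y" using lipschitz_onD[OF eta_lip xy(1,2)] .
        moreover have "dist x y = y - x" using xy(3) unfolding dist_real_def by simp
        ultimately show "dist (eta x) (eta y) \<le> L * (y - x)" by simp
      qed (use ts False in auto)
      also have "\<dots> \<le> L * u"
      proof (rule mult_left_mono)
        have "last ts \<le> u" "0 \<le> hd ts" using ts(2) last_in_set[OF False] hd_in_set[OF False] by auto
        then show "last ts - hd ts \<le> u" by simp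
        show "0 \<le> L" using Lpos L_def by simp
      qed
      finally show ?thesis by (simp add: ennreal_leI mult.commute)
    qed simp
  qed
next
  have "ennreal (u * L) = var_on g 0 (phi u)" using var_real[of 0 "phi u"] phi[OF u] by simp
  also have "\<dots> \<le> var_on eta 0 u"
  proof (rule var_le)
    fix ts assume ts: "sorted ts" "set ts \<subseteq> {0..phi u}"
    define h where "h t = w 0 t / L" for t
    have ts01: "set ts \<subseteq> {0..1}" using ts phi[OF u] by auto
    have hin: "h t \<in> {0..1}" if "t \<in> {0..1}" for t
      using that w_nonneg[of 0 t] w_mono0[of t 1] Lpos L_def unfolding h_def by auto
    have "psum eta (map h ts) = psum (eta \<circ> h) ts" by (rule psum_map)
    also have "\<dots> = psum g ts"
    proof (rule psum_cong)
      fix t assume "t \<in> set ts"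
      then have t: "t \<in> {0..1}" using ts01 by auto
      have "w 0 (phi (h t)) = w 0 t" using phi[OF _ _] hin[OF t] Lpos L_def unfolding h_def by auto
      then show "(eta \<circ> h) t = g t" unfolding eta_def comp_def
        using same_w_same_g[of "phi (h t)" t] phi hin[OF t] t by auto
    qed
    finally have eq: "psum eta (map h ts) = psum g ts" .
    have "ennreal (psum eta (map h ts)) \<le> var_on eta 0 u"
    proof (rule var_ge)
      show "sorted (map h ts)"
        using ts(1) ts01 Lpos L_def unfolding h_def
        by (intro sorted_map_mono) (auto intro!: divide_right_mono w_mono0 simp: subset_iff)
      show "set (map h ts) \<subseteq> {0..u}"
      proof
        fix x assume "x \<in> set (map h ts)"
        then obtain t where t: "t \<in> set ts" "x = h t" by auto
        have "w 0 t \<le> w 0 (phi u)" using t ts phi[OF u] by (intro w_mono0) auto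
        then have "x \<le> u" using t phi[OF u] Lpos L_def unfolding h_def by (simp add: divide_le_eq)
        then show "x \<in> {0..u}" using hin t ts01 by auto
      qed
    qed
    then show "ennreal (psum g ts) \<le> var_on eta 0 u" using eq by simp
  qed
  finally show "ennreal (u * L) \<le> var_on eta 0 u" .
qed

lemma eta_length: "curve_length eta = curve_length g"
  unfolding curve_length_def using var_eta[of 1] var_real[of 0 1] L_def by simp

lemma eta_arclen: assumes s: "0 \<le> s" "s \<le> L" shows "arclen_param eta s = arclen_param g s"
proof -
  have sl: "s / L \<in> {0..1}" using s Lpos L_def by auto
  have "(SOME t. t \<in> {0..1} \<and> var_on eta 0 t = ennreal s) = s / L"
  proof (rule some_equality)
    show "s / L \<in> {0..1} \<and> var_on eta 0 (s / L) = ennreal s"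
      using sl var_eta[of "s/L"] Lpos L_def by auto
    fix t assume t: "t \<in> {0..1} \<and> var_on eta 0 t = ennreal s"
    then have "ennreal (t * L) = ennreal s" using var_eta[of t] by auto
    then have "t * L = s" using t s Lpos L_def by (subst (asm) ennreal_inj) auto
    then show "t = s / L" using Lpos L_def by (auto simp: field_simps)
  qed
  then have "arclen_param eta s = g (phi (s / L))" unfolding arclen_param_def eta_def by simp
  also have "\<dots> = arclen_param g s" unfolding phi_def arclen_param_def using Lpos L_def by simp
  finally show ?thesis .
qed

lemma eta_ends: "eta 0 = g 0" "eta 1 = g 1"
proof -
  show "eta 0 = g 0" unfolding eta_def using phi[of 0] w_refl[of 0]
    by (intro same_w_same_g) auto
  show "eta 1 = g 1" unfolding eta_def using phi[of 1] L_def
    by (intro same_w_same_g) auto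
qed

lemma eta_line_integral: "line_integral \<rho> eta = line_integral \<rho> g"
  unfolding line_integral_def eta_length
proof (rule nn_integral_cong)
  fix s :: real
  have Lc: "enn2real (curve_length g) = L" unfolding curve_length_def L_def w_def ..
  show "\<rho> (arclen_param eta s) * indicator {0..enn2real (curve_length g)} s =
        \<rho> (arclen_param g s) * indicator {0..enn2real (curve_length g)} s"
    unfolding Lc by (cases "s \<in> {0..L}") (auto simp: eta_arclen)
qed

end

end


lemma reparam:
  assumes cont: "continuous_on {0..1} g" and fin: "curve_length g \<noteq> \<infinity>"
  shows "\<exists>\<eta>. (\<exists>K. K-lipschitz_on {0..1} \<eta>) \<and> \<eta> 0 = g 0 \<and> \<eta> 1 = g 1 \<and>
           curve_length \<eta> = curve_length g \<and> (\<forall>\<rho>. line_integral \<rho> \<eta> = line_integral \<rho> g)"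
proof -
  have fin': "var_on g 0 1 \<noteq> \<infinity>" using fin unfolding curve_length_def .
  show ?thesis
  proof (cases "w g 0 1 > 0")
    case True
    show ?thesis
      apply (rule exI[of _ "eta g"])
      using eta_lip[OF cont fin' True] eta_ends[OF cont fin' True] eta_length[OF cont fin' True]
        eta_line_integral[OF cont fin' True] by blast
  next
    case False
    then have w0: "w g 0 1 = 0" using w_nonneg[OF cont fin', of 0 1] by simp
    have const: "g x = g 0" if "x \<in> {0..1}" for x
    proof -
      have "dist (g 0) (g x) \<le> w g 0 x" using dist_w[OF cont fin', of 0 x] that by simp
      also have "\<dots> \<le> w g 0 1" using w_mono0[OF cont fin', of x 1] that by simp
      finally show ?thesis using w0 by simp
    qed
    have "0-lipschitz_on {0..1} g"
    proof (rule lipschitz_onI)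
      fix x y :: real assume "x \<in> {0..1}" "y \<in> {0..1}"
      then have "g x = g 0" "g y = g 0" using const by blast+
      then show "dist (g x) (g y) \<le> 0 * dist x y" by simp
    qed simp
    then show ?thesis by blast
  qed
qed

lemma Mod_empty: "Mod M p {} = 0"
proof -
  have adm: "admissible {} (\<lambda>_. 0)" unfolding admissible_def by simp
  show ?thesis
  proof (cases "p = \<infinity>")
    case True
    have "ess_sup_enn M (\<lambda>_. 0) = 0" unfolding ess_sup_enn_def by (simp add: bot_ennreal)
    have "Mod M p {} = Inf {ess_sup_enn M \<rho> |\<rho>. admissible {} \<rho>}" using True by (simp add: Mod_def)
    also have "\<dots> \<le> ess_sup_enn M (\<lambda>_. 0)" by (rule Inf_lower) (use adm in blast)
    also have "\<dots> = 0" by fact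
    finally have "Mod M p {} \<le> 0" .
    then show ?thesis by simp
  next
    case False
    have "(\<integral>\<^sup>+ x. enn_powr ((\<lambda>_. 0) x) (enn2real p) \<partial>M) = 0" unfolding enn_powr_def by simp
    have "Mod M p {} = Inf {(\<integral>\<^sup>+ x. enn_powr (\<rho> x) (enn2real p) \<partial>M) |\<rho>. admissible {} \<rho>}"
      using False by (simp add: Mod_def)
    also have "\<dots> \<le> (\<integral>\<^sup>+ x. enn_powr ((\<lambda>_. 0) x) (enn2real p) \<partial>M)"
      by (rule Inf_lower, rule CollectI, rule exI[of _ "\<lambda>_. 0"]) (simp add: adm)
    also have "\<dots> = 0" by fact
    finally have "Mod M p {} \<le> 0" .
    then show ?thesis by simp
  qed
qed

lemma Mod_mono: "(\<And>\<rho>. admissible \<Gamma>' \<rho> \<Longrightarrow> admissible \<Gamma> \<rho>) \<Longrightarrow> Mod M p \<Gamma> \<le> Mod M p \<Gamma>'"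
proof -
  assume H: "\<And>\<rho>. admissible \<Gamma>' \<rho> \<Longrightarrow> admissible \<Gamma> \<rho>"
  have 1: "{ess_sup_enn M \<rho> |\<rho>. admissible \<Gamma>' \<rho>} \<subseteq> {ess_sup_enn M \<rho> |\<rho>. admissible \<Gamma> \<rho>}"
    using H by blast
  have 2: "{(\<integral>\<^sup>+ x. enn_powr (\<rho> x) (enn2real p) \<partial>M) |\<rho>. admissible \<Gamma>' \<rho>}
      \<subseteq> {(\<integral>\<^sup>+ x. enn_powr (\<rho> x) (enn2real p) \<partial>M) |\<rho>. admissible \<Gamma> \<rho>}"
    using H by blast
  show ?thesis unfolding Mod_def using Inf_superset_mono[OF 1] Inf_superset_mono[OF 2] by simp
qed

lemma lower_bound:
  "ennreal (dist a b - 2 * d) \<le> ess_length M p (lip_curves (cball a d) (cball b d))"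
proof -
  let ?G = "lip_curves (cball a d) (cball b d)"
  have "(INF \<gamma>\<in>?G - {}. curve_length \<gamma>) \<le> ess_length M p ?G"
    unfolding ess_length_def by (rule SUP_upper) (simp add: Mod_empty)
  moreover have "ennreal (dist a b - 2 * d) \<le> (INF \<gamma>\<in>?G - {}. curve_length \<gamma>)"
  proof (rule INF_greatest)
    fix \<gamma> assume "\<gamma> \<in> ?G - {}"
    then have e: "dist a (\<gamma> 0) \<le> d" "dist b (\<gamma> 1) \<le> d" unfolding lip_curves_def by auto
    have "dist a b \<le> dist a (\<gamma> 0) + dist (\<gamma> 0) b" by (rule dist_triangle)
    moreover have "dist (\<gamma> 0) b \<le> dist (\<gamma> 0) (\<gamma> 1) + dist b (\<gamma> 1)" by (rule dist_triangle2)
    ultimately have "dist a b - 2 * d \<le> dist (\<gamma> 0) (\<gamma> 1)" using e by linarith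
    then have "ennreal (dist a b - 2 * d) \<le> ennreal (dist (\<gamma> 0) (\<gamma> 1))" by (rule ennreal_leI)
    also have "\<dots> \<le> curve_length \<gamma>" unfolding curve_length_def by (rule var_dist) simp
    finally show "ennreal (dist a b - 2 * d) \<le> curve_length \<gamma>" .
  qed
  ultimately show ?thesis by (rule order_trans[rotated])
qed

lemma upper_bound:
  assumes mms: "metric_measure_space M" and thick: "p_thick_geodesic M p" and d: "d > 0"
  shows "ess_length M p (lip_curves (cball a d) (cball b d)) \<le> ennreal ((1 + d) * (dist a b + 2 * d))"
  unfolding ess_length_def
proof (rule SUP_least)
  fix \<Gamma>0 assume "\<Gamma>0 \<in> {\<Gamma>0. Mod M p \<Gamma>0 = 0}"
  then have m0: "Mod M p \<Gamma>0 = 0" by simp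
  let ?B = "ennreal ((1 + d) * (dist a b + 2 * d))"
  let ?G = "lip_curves (cball a d) (cball b d)"
  let ?Q = "quasi_geod_curves (ball a d) (ball b d) (1 + d)"
  show "(INF \<gamma> \<in> ?G - \<Gamma>0. curve_length \<gamma>) \<le> ?B"
  proof (rule ccontr)
    assume nle: "\<not> (INF \<gamma> \<in> ?G - \<Gamma>0. curve_length \<gamma>) \<le> ?B"
    have inG0: "\<exists>\<eta>\<in>\<Gamma>0. \<forall>\<rho>. line_integral \<rho> \<eta> = line_integral \<rho> \<gamma>" if "\<gamma> \<in> ?Q" for \<gamma>
    proof -
      from that have \<gamma>: "continuous_on {0..1} \<gamma>" "\<gamma> 0 \<in> ball a d" "\<gamma> 1 \<in> ball b d"
        "curve_length \<gamma> \<le> ennreal ((1 + d) * dist (\<gamma> 0) (\<gamma> 1))"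
        unfolding quasi_geod_curves_def by auto
      have fin: "curve_length \<gamma> \<noteq> \<infinity>" using \<gamma>(4) by (auto simp: top_unique)
      obtain \<eta> where \<eta>: "\<exists>K. K-lipschitz_on {0..1} \<eta>" "\<eta> 0 = \<gamma> 0" "\<eta> 1 = \<gamma> 1"
        "curve_length \<eta> = curve_length \<gamma>" "\<forall>\<rho>. line_integral \<rho> \<eta> = line_integral \<rho> \<gamma>"
        using reparam[OF \<gamma>(1) fin] by blast
      have inG: "\<eta> \<in> ?G" unfolding lip_curves_def using \<eta> \<gamma> by auto
      have g0: "dist a (\<gamma> 0) < d" and g1: "dist b (\<gamma> 1) < d" using \<gamma>(2,3) by auto
      have t1: "dist (\<gamma> 0) (\<gamma> 1) \<le> dist (\<gamma> 0) a + dist a (\<gamma> 1)" by (rule dist_triangle)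
      have t2: "dist a (\<gamma> 1) \<le> dist a b + dist b (\<gamma> 1)" by (rule dist_triangle)
      have t3: "dist (\<gamma> 0) a = dist a (\<gamma> 0)" by (rule dist_commute)
      have "dist (\<gamma> 0) (\<gamma> 1) \<le> dist a b + 2 * d" using g0 g1 t1 t2 t3 by linarith
      then have "(1 + d) * dist (\<gamma> 0) (\<gamma> 1) \<le> (1 + d) * (dist a b + 2 * d)"
        using d by (intro mult_left_mono) auto
      then have "ennreal ((1 + d) * dist (\<gamma> 0) (\<gamma> 1)) \<le> ?B" by (rule ennreal_leI)
      then have lenB: "curve_length \<eta> \<le> ?B" using \<eta>(4) \<gamma>(4) by simp
      have "\<eta> \<in> \<Gamma>0"
      proof (rule ccontr)
        assume "\<eta> \<notin> \<Gamma>0"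
        then have "\<eta> \<in> ?G - \<Gamma>0" using inG by simp
        then have "(INF \<gamma> \<in> ?G - \<Gamma>0. curve_length \<gamma>) \<le> curve_length \<eta>" by (rule INF_lower)
        then show False using nle lenB order_trans by blast
      qed
      then show ?thesis using \<eta>(5) by blast
    qed
    have "Mod M p ?Q \<le> Mod M p \<Gamma>0"
    proof (rule Mod_mono)
      fix \<rho> assume adm: "admissible \<Gamma>0 \<rho>"
      show "admissible ?Q \<rho>" unfolding admissible_def
      proof (intro conjI ballI)
        show "\<rho> \<in> borel_measurable borel" using adm unfolding admissible_def by blast
        fix \<gamma> assume "\<gamma> \<in> ?Q"
        then obtain \<eta> where e1: "\<eta> \<in> \<Gamma>0" and e2: "\<forall>\<rho>. line_integral \<rho> \<eta> = line_integral \<rho> \<gamma>" using inG0 by blast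
        have "1 \<le> line_integral \<rho> \<eta>" using adm e1 unfolding admissible_def by blast
        then show "1 \<le> line_integral \<rho> \<gamma>" using e2 by simp
      qed
    qed
    then have "Mod M p ?Q = 0" using m0 by simp
    moreover have "0 < Mod M p ?Q"
    proof -
      have sM: "sets M = sets borel" using mms unfolding metric_measure_space_def by blast
      have bs: "ball x d \<in> sets M" for x :: 'a using sM by simp
      have bsc: "ball x d \<in> sets (completion M)" for x :: 'a using bs by (rule sets_completionI_sets)
      have "0 < emeasure M (ball x d)" for x :: 'a
        using mms d unfolding metric_measure_space_def by blast
      then have pos: "0 < emeasure (completion M) (ball x d)" for x :: 'a
        using emeasure_completion[OF bsc[of x]] main_part[OF bs[of x]] by simp
      have H: "\<And>C E F. C > 1 \<Longrightarrow> E \<in> sets (completion M) \<Longrightarrow> F \<in> sets (completion M) \<Longrightarrow>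
          0 < emeasure (completion M) E \<Longrightarrow> 0 < emeasure (completion M) F \<Longrightarrow>
          0 < Mod M p (quasi_geod_curves E F C)"
        using thick unfolding p_thick_geodesic_def by blast
      show ?thesis by (rule H) (use d bsc pos in auto)
    qed
    ultimately show False by simp
  qed
qed

lemma dp'_eq:
  assumes mms: "metric_measure_space M" and thick: "p_thick_geodesic M p"
  shows "dp' M p a b = ennreal (dist a b)"
  unfolding dp'_def
proof (rule tendsto_Lim)
  show "\<not> trivial_limit (at_right (0::real))" by simp
  let ?f = "\<lambda>d. ess_length M p (lip_curves (cball a d) (cball b d))"
  show "(?f \<longlongrightarrow> ennreal (dist a b)) (at_right 0)"
  proof (rule tendsto_sandwich[where f = "\<lambda>d. ennreal (dist a b - 2 * d)"
        and h = "\<lambda>d. ennreal ((1 + d) * (dist a b + 2 * d))"])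
    show "\<forall>\<^sub>F d in at_right 0. ennreal (dist a b - 2 * d) \<le> ?f d"
      by (rule always_eventually) (simp add: lower_bound)
    show "\<forall>\<^sub>F d in at_right 0. ?f d \<le> ennreal ((1 + d) * (dist a b + 2 * d))"
      using eventually_at_right_less[of "0::real"]
      by eventually_elim (rule upper_bound[OF mms thick])
    have "((\<lambda>d::real. dist a b - 2 * d) \<longlongrightarrow> dist a b - 2 * 0) (at_right 0)"
      by (intro tendsto_intros)
    then show "((\<lambda>d. ennreal (dist a b - 2 * d)) \<longlongrightarrow> ennreal (dist a b)) (at_right 0)"
      by (intro tendsto_ennrealI) simp
    have "((\<lambda>d::real. (1 + d) * (dist a b + 2 * d)) \<longlongrightarrow> (1 + 0) * (dist a b + 2 * 0)) (at_right 0)"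
      by (intro tendsto_intros)
    then show "((\<lambda>d. ennreal ((1 + d) * (dist a b + 2 * d))) \<longlongrightarrow> ennreal (dist a b)) (at_right 0)"
      by (intro tendsto_ennrealI) simp
  qed
qed

theorem corollary5p10:
  fixes M :: "'a::metric_space measure" and p :: ennreal
  assumes "1 \<le> p"
    and "metric_measure_space M"
    and "infinitesimally_doubling M"
    and "p_thick_geodesic M p"
  shows "\<forall>x y. dp M p x y = ennreal (dist x y)"
proof (intro allI)
  fix x y :: 'a
  have dpe: "dp' M p a b = ennreal (dist a b)" for a b using dp'_eq assms(2,4) by blast
  show "dp M p x y = ennreal (dist x y)"
    unfolding dp_def
  proof (rule antisym)
    show "(INF xs \<in> {xs. 2 \<le> length xs \<and> hd xs = x \<and> last xs = y}.
        \<Sum>i<length xs - 1. dp' M p (xs ! i) (xs ! (i + 1))) \<le> ennreal (dist x y)"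
      by (rule INF_lower2[of "[x, y]"]) (auto simp: dpe)
    show "ennreal (dist x y) \<le> (INF xs \<in> {xs. 2 \<le> length xs \<and> hd xs = x \<and> last xs = y}.
        \<Sum>i<length xs - 1. dp' M p (xs ! i) (xs ! (i + 1)))"
    proof (rule INF_greatest)
      fix xs assume xs: "xs \<in> {xs. 2 \<le> length xs \<and> hd xs = x \<and> last xs = y}"
      then have ne: "xs \<noteq> []" by auto
      have "(\<Sum>i<length xs - 1. dp' M p (xs ! i) (xs ! (i + 1)))
          = ennreal (\<Sum>i<length xs - 1. dist (id (xs ! i)) (id (xs ! (i + 1))))"
        by (simp add: dpe)
      also have "\<dots> = ennreal (psum id xs)" by (simp only: sum_eq_psum)
      finally have eq: "(\<Sum>i<length xs - 1. dp' M p (xs ! i) (xs ! (i + 1))) = ennreal (psum id xs)" .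
      have "dist (id (hd xs)) (id (last xs)) \<le> psum id xs" by (rule psum_ge_dist[OF ne])
      then show "ennreal (dist x y) \<le> (\<Sum>i<length xs - 1. dp' M p (xs ! i) (xs ! (i + 1)))"
        using xs eq by (auto intro: ennreal_leI)
    qed
  qed
qed

end
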